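(* Let $X$ be a locally compact, geodesically complete CAT(0)-space connected at infinity, and let $x_0,y\in X$, $y\neq x_0$. For every $K>0$ and $\varepsilon>0$ there exists $\delta>0$ such that for every $x_1\in B(x_0,\delta)$ with $|yx_1|=|yx_0|$, $$\partial_\infty(\operatorname{Shadow}_y(x_1))\subset\mathcal N_{y,K,\varepsilon}\big(\partial_\infty(\operatorname{Shadow}_y(x_0))\big).$$
   Context: For $y,z\in\overline X=X\cup\partial_\infty X$, $[yz]$ denotes a geodesic segment, ray or complete geodesic joining them; $\operatorname{Shadow}_y(x)=\{z\in\overline X:\ \text{there is }[yz]\text{ with }x\in[yz]\}$ and $\partial_\infty(\operatorname{Shadow}_y(x))=\operatorname{Shadow}_y(x)\cap\partial_\infty X$. For $\mathcal V\subset\partial_\infty X$, $\mathcal N_{y,K,\varepsilon}(\mathcal V)$ is the set of $\zeta\in\partial_\infty X$ for which there is $\xi\in\mathcal V$ with $|c(K)\,c_*(K)|<\varepsilon$, where $c=[y\xi]$ and $c_*=[y\zeta]$ are the arclength-parametrized rays from $y$. *)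

theory Defs
  imports "HOL-Analysis.Analysis"
begin

text \<open>The space X is the whole type 'a (a metric space).\<close>

definition geodesic_segment :: "(real \<Rightarrow> 'a::metric_space) \<Rightarrow> 'a \<Rightarrow> 'a \<Rightarrow> bool" where
  "geodesic_segment g a b \<longleftrightarrow> g 0 = a \<and> g (dist a b) = b \<and>
     (\<forall>s t. 0 \<le> s \<and> s \<le> dist a b \<and> 0 \<le> t \<and> t \<le> dist a b \<longrightarrow> dist (g s) (g t) = \<bar>s - t\<bar>)"

definition geodesic_ray :: "(real \<Rightarrow> 'a::metric_space) \<Rightarrow> bool" where
  "geodesic_ray c \<longleftrightarrow> (\<forall>s t. 0 \<le> s \<and> 0 \<le> t \<longrightarrow> dist (c s) (c t) = \<bar>s - t\<bar>)"

definition geodesic_line :: "(real \<Rightarrow> 'a::metric_space) \<Rightarrow> bool" where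
  "geodesic_line c \<longleftrightarrow> (\<forall>s t. dist (c s) (c t) = \<bar>s - t\<bar>)"

definition geodesic_space :: "'a::metric_space itself \<Rightarrow> bool" where
  "geodesic_space _ \<longleftrightarrow> (\<forall>a b::'a. \<exists>g. geodesic_segment g a b)"

text \<open>Correspondence between points of a geodesic triangle with sides g1 = [ab], g2 = [bc],
  g3 = [ca] and points of a Euclidean comparison triangle a' b' c' in the plane.\<close>
definition tri_cmp ::
  "'a::metric_space \<Rightarrow> 'a \<Rightarrow> 'a \<Rightarrow> (real \<Rightarrow> 'a) \<Rightarrow> (real \<Rightarrow> 'a) \<Rightarrow> (real \<Rightarrow> 'a)
   \<Rightarrow> complex \<Rightarrow> complex \<Rightarrow> complex \<Rightarrow> 'a \<Rightarrow> complex \<Rightarrow> bool" where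
  "tri_cmp a b c g1 g2 g3 a' b' c' p p' \<longleftrightarrow>
     (\<exists>s. 0 \<le> s \<and> s \<le> 1 \<and>
        ((p = g1 (s * dist a b) \<and> p' = a' + of_real s * (b' - a')) \<or>
         (p = g2 (s * dist b c) \<and> p' = b' + of_real s * (c' - b')) \<or>
         (p = g3 (s * dist c a) \<and> p' = c' + of_real s * (a' - c'))))"

definition CAT0_space :: "'a::metric_space itself \<Rightarrow> bool" where
  "CAT0_space T \<longleftrightarrow> complete (UNIV :: 'a set) \<and> geodesic_space T \<and>
     (\<forall>(a::'a) b c g1 g2 g3 a' b' c'.
        geodesic_segment g1 a b \<and> geodesic_segment g2 b c \<and> geodesic_segment g3 c a \<and>
        dist a' b' = dist a b \<and> dist b' c' = dist b c \<and> dist c' a' = dist c a \<longrightarrow>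
        (\<forall>p p' q q'. tri_cmp a b c g1 g2 g3 a' b' c' p p' \<and> tri_cmp a b c g1 g2 g3 a' b' c' q q'
            \<longrightarrow> dist p q \<le> dist p' q'))"

definition locally_compact_metric :: "'a::metric_space itself \<Rightarrow> bool" where
  "locally_compact_metric _ \<longleftrightarrow> (\<forall>x::'a. \<exists>r>0. compact (cball x r))"

definition geodesically_complete :: "'a::metric_space itself \<Rightarrow> bool" where
  "geodesically_complete _ \<longleftrightarrow>
     (\<forall>(g::real \<Rightarrow> 'a) a b. a \<noteq> b \<and> geodesic_segment g a b \<longrightarrow>
        (\<exists>c. geodesic_line c \<and> (\<forall>t. 0 \<le> t \<and> t \<le> dist a b \<longrightarrow> c t = g t)))"

definition connected_at_infinity :: "'a::metric_space itself \<Rightarrow> bool" where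
  "connected_at_infinity _ \<longleftrightarrow>
     (\<forall>C::'a set. compact C \<longrightarrow> (\<exists>D. compact D \<and> C \<subseteq> D \<and>
        (\<forall>x y. x \<notin> D \<and> y \<notin> D \<longrightarrow>
           (\<exists>p. path p \<and> pathstart p = x \<and> pathfinish p = y \<and> path_image p \<subseteq> - C))))"

definition asymptotic :: "(real \<Rightarrow> 'a::metric_space) \<Rightarrow> (real \<Rightarrow> 'a) \<Rightarrow> bool" where
  "asymptotic c d \<longleftrightarrow> (\<exists>B. \<forall>t\<ge>0. dist (c t) (d t) \<le> B)"

definition ray_class :: "(real \<Rightarrow> 'a::metric_space) \<Rightarrow> (real \<Rightarrow> 'a) set" where
  "ray_class c = {d. geodesic_ray d \<and> asymptotic c d}"

definition boundary_at_infinity :: "(real \<Rightarrow> 'a::metric_space) set set" where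
  "boundary_at_infinity = {ray_class c | c. geodesic_ray c}"

definition ray_from_to :: "'a::metric_space \<Rightarrow> (real \<Rightarrow> 'a) set \<Rightarrow> (real \<Rightarrow> 'a) \<Rightarrow> bool" where
  "ray_from_to y \<xi> c \<longleftrightarrow> geodesic_ray c \<and> c 0 = y \<and> c \<in> \<xi>"

definition boundary_shadow :: "'a::metric_space \<Rightarrow> 'a \<Rightarrow> (real \<Rightarrow> 'a) set set" where
  "boundary_shadow y x = {\<xi> \<in> boundary_at_infinity. \<exists>c. ray_from_to y \<xi> c \<and> (\<exists>t\<ge>0. c t = x)}"

definition ray_nbhd :: "'a::metric_space \<Rightarrow> real \<Rightarrow> real \<Rightarrow> (real \<Rightarrow> 'a) set set \<Rightarrow> (real \<Rightarrow> 'a) set set" where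
  "ray_nbhd y K \<epsilon> V = {\<zeta> \<in> boundary_at_infinity. \<exists>\<xi>\<in>V. \<exists>c c'.
       ray_from_to y \<xi> c \<and> ray_from_to y \<zeta> c' \<and> dist (c K) (c' K) < \<epsilon>}"

end

theory Submission
  imports Defs
begin


lemma retract_point:
  fixes y q :: "'a::metric_space"
  assumes gs: "geodesic_space TYPE('a)" and a: "0 \<le> a" and b: "0 \<le> b" and d: "dist y q \<le> a + b"
  shows "\<exists>q'. dist y q' \<le> a \<and> dist q' q \<le> b"
proof (cases "dist y q \<le> a")
  case True then show ?thesis by (intro exI[of _ q]) (simp add: b)
next
  case False
  obtain g where g: "geodesic_segment g y q" using gs unfolding geodesic_space_def by blast
  have iso: "\<forall>s t. 0 \<le> s \<and> s \<le> dist y q \<and> 0 \<le> t \<and> t \<le> dist y q \<longrightarrow> dist (g s) (g t) = \<bar>s - t\<bar>"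
    using g unfolding geodesic_segment_def by blast
  have 1: "dist (g 0) (g a) = \<bar>0 - a\<bar>" using iso[rule_format, of 0 a] False a by linarith
  have 2: "dist (g a) (g (dist y q)) = \<bar>a - dist y q\<bar>" using iso[rule_format, of a "dist y q"] False a by linarith
  have e: "g 0 = y" "g (dist y q) = q" using g unfolding geodesic_segment_def by auto
  have "dist y (g a) = a" using 1 e a by simp
  moreover have "dist (g a) q = dist y q - a" using 2 e False by simp
  ultimately show ?thesis using d by (intro exI[of _ "g a"]) auto
qed

lemma proper:
  fixes y :: "'a::metric_space"
  assumes cp: "complete (UNIV::'a set)" and gs: "geodesic_space TYPE('a)"
    and lc: "locally_compact_metric TYPE('a)"
  shows "compact (cball y R)"
proof (rule ccontr)
  assume nR: "\<not> compact (cball y R)"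
  define S where "S = {r. compact (cball y r)}"
  have down: "r \<in> S" if "s \<in> S" "r \<le> s" for r s
  proof -
    have "cball y r = cball y s \<inter> cball y r" using that(2) by auto
    moreover have "compact (cball y s \<inter> cball y r)" using that(1) unfolding S_def
      by (intro compact_Int_closed) auto
    ultimately show ?thesis unfolding S_def by simp
  qed
  have bdd: "bdd_above S"
  proof
    fix r assume "r \<in> S"
    show "r \<le> R"
    proof (rule ccontr)
      assume "\<not> r \<le> R" then have "R \<in> S" using down[OF \<open>r \<in> S\<close>] by simp
      then show False using nR unfolding S_def by simp
    qed
  qed
  obtain r0 where r0: "r0 > 0" "compact (cball y r0)" using lc unfolding locally_compact_metric_def by blast
  then have "r0 \<in> S" unfolding S_def by simp
  define Rs where "Rs = Sup S"
  have r0Rs: "r0 \<le> Rs" unfolding Rs_def using \<open>r0 \<in> S\<close> bdd by (rule cSup_upper)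
  have lt: "r \<in> S" if rRs: "r < Rs" for r
  proof -
    have "S \<noteq> {}" using \<open>r0 \<in> S\<close> by blast
    then obtain s where "s \<in> S" "r < s" using less_cSupE[of r S] rRs unfolding Rs_def by blast
    then show ?thesis using down by simp
  qed
  have cRs: "compact (cball y Rs)"
    unfolding compact_eq_totally_bounded
  proof safe
    show "complete (cball y Rs)" by (rule complete_closed_subset[OF closed_cball _ cp]) simp
  next
    fix e :: real assume e: "e > 0"
    define r where "r = max 0 (Rs - e/2)"
    have "r < Rs" using r0 r0Rs e unfolding r_def by auto
    then have "compact (cball y r)" using lt unfolding S_def by auto
    moreover have e2: "e/2 > 0" using e by simp
    ultimately obtain k where k: "finite k" "cball y r \<subseteq> (\<Union>x\<in>k. ball x (e/2))"
      unfolding compact_eq_totally_bounded by blast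
    show "\<exists>k. finite k \<and> cball y Rs \<subseteq> (\<Union>x\<in>k. ball x e)"
    proof (intro exI conjI subsetI)
      show "finite k" by fact
      fix p assume "p \<in> cball y Rs"
      then have "dist y p \<le> r + e/2" unfolding r_def by auto
      then obtain q where q: "dist y q \<le> r" "dist q p \<le> e/2"
        using retract_point[OF gs, of r "e/2" y p] e unfolding r_def by auto
      then obtain x where x: "x \<in> k" "dist x q < e/2" using k by auto
      have "dist x p < e" using dist_triangle[of x p q] x q by linarith
      then show "p \<in> (\<Union>x\<in>k. ball x e)" using x by auto
    qed
  qed
  have "Rs \<in> S" using cRs unfolding S_def by simp
  have "\<forall>p::'a. \<exists>rp. rp > 0 \<and> compact (cball p rp)" using lc unfolding locally_compact_metric_def by simp
  then obtain rp where rpa: "\<forall>p::'a. rp p > 0 \<and> compact (cball p (rp p))" by (metis choice)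
  have rp: "\<And>p. rp p > 0" "\<And>p. compact (cball p (rp p))" using rpa by blast+
  have cov: "cball y Rs \<subseteq> (\<Union>p\<in>cball y Rs. ball p (rp p / 2))"
  proof
    fix p assume "p \<in> cball y Rs"
    moreover have "p \<in> ball p (rp p / 2)" using rp(1)[of p] by simp
    ultimately show "p \<in> (\<Union>p\<in>cball y Rs. ball p (rp p / 2))" by (rule UN_I)
  qed
  obtain F where F: "F \<subseteq> cball y Rs" "finite F" "cball y Rs \<subseteq> (\<Union>p\<in>F. ball p (rp p / 2))"
    by (rule compactE_image[OF cRs _ cov]) auto
  have "y \<in> cball y Rs" using r0 r0Rs by simp
  then have Fne: "F \<noteq> {}" using F(3) by auto
  define eta where "eta = Min ((\<lambda>p. rp p / 2) ` F)"
  have eta: "eta > 0" unfolding eta_def using F(2) Fne rp(1) by (simp add: Min_gr_iff)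
  have etale: "eta \<le> rp p / 2" if "p \<in> F" for p unfolding eta_def using F(2) that by (intro Min_le) auto
  have "cball y (Rs + eta) \<subseteq> (\<Union>p\<in>F. cball p (rp p))"
  proof
    fix q assume "q \<in> cball y (Rs + eta)"
    then obtain q' where q': "dist y q' \<le> Rs" "dist q' q \<le> eta"
      using retract_point[OF gs, of Rs eta y q] eta r0 r0Rs by auto
    then have "q' \<in> cball y Rs" by simp
    then obtain p where p: "p \<in> F" "dist p q' < rp p / 2" using F(3) by (auto simp del: mem_cball)
    have "dist p q \<le> rp p" using dist_triangle[of p q q'] p q' etale[OF p(1)] by linarith
    then show "q \<in> (\<Union>p\<in>F. cball p (rp p))" using p by auto
  qed
  moreover have cU: "compact (\<Union>p\<in>F. cball p (rp p))" using F(2) rp(2) by (intro compact_UN) auto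
  ultimately have "cball y (Rs + eta) = (\<Union>p\<in>F. cball p (rp p)) \<inter> cball y (Rs + eta)" by blast
  moreover have "compact ((\<Union>p\<in>F. cball p (rp p)) \<inter> cball y (Rs + eta))"
    using \<open>compact (\<Union>p\<in>F. cball p (rp p))\<close> by (intro compact_Int_closed) auto
  ultimately have "compact (cball y (Rs + eta))" by simp
  then have "Rs + eta \<in> S" unfolding S_def by simp
  then have "Rs + eta \<le> Rs" unfolding Rs_def using bdd by (rule cSup_upper)
  then show False using eta by simp
qed



lemma cat0_isoceles:
  fixes y z w :: "'a::metric_space"
  assumes cat: "CAT0_space TYPE('a)" and g: "geodesic_segment g y z" and h: "geodesic_segment h y w"
    and dz: "dist y z = T" and dw: "dist y w = T" and K0: "0 \<le> K" and KT: "K \<le> T"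
  shows "dist (g K) (h K) \<le> dist z w"
proof (cases "T = 0")
  case True
  then have "K = 0" using K0 KT by simp
  moreover have "g 0 = y" "h 0 = y" using g h unfolding geodesic_segment_def by auto
  ultimately show ?thesis by simp
next
  case False
  then have T: "T > 0" using dz by (metis zero_le_dist order_le_less)
  have gs: "geodesic_space TYPE('a)" and cmp: "\<forall>(a::'a) b c g1 g2 g3 a' b' c'.
        geodesic_segment g1 a b \<and> geodesic_segment g2 b c \<and> geodesic_segment g3 c a \<and>
        dist a' b' = dist a b \<and> dist b' c' = dist b c \<and> dist c' a' = dist c a \<longrightarrow>
        (\<forall>p p' q q'. tri_cmp a b c g1 g2 g3 a' b' c' p p' \<and> tri_cmp a b c g1 g2 g3 a' b' c' q q'
            \<longrightarrow> dist p q \<le> dist p' q')" using cat unfolding CAT0_space_def by blast+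
  obtain g2 where g2: "geodesic_segment g2 z w" using gs unfolding geodesic_space_def by blast
  define g3 where "g3 = (\<lambda>s. h (T - s))"
  have h0: "h 0 = y" and hT: "h T = w" and hiso: "\<And>s t. 0 \<le> s \<Longrightarrow> s \<le> T \<Longrightarrow> 0 \<le> t \<Longrightarrow> t \<le> T \<Longrightarrow> dist (h s) (h t) = \<bar>s - t\<bar>"
    using h dw unfolding geodesic_segment_def by auto
  have g3: "geodesic_segment g3 w y"
    unfolding geodesic_segment_def g3_def
  proof (intro conjI allI impI)
    show "h (T - 0) = w" using hT by simp
    show "h (T - dist w y) = y" using h0 dw by (simp add: dist_commute)
    fix s t assume "0 \<le> s \<and> s \<le> dist w y \<and> 0 \<le> t \<and> t \<le> dist w y"
    then have "0 \<le> s" "s \<le> T" "0 \<le> t" "t \<le> T" using dw by (auto simp: dist_commute)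
    then show "dist (h (T - s)) (h (T - t)) = \<bar>s - t\<bar>" using hiso[of "T - s" "T - t"] by simp
  qed
  define e where "e = dist z w"
  have e0: "0 \<le> e" unfolding e_def by simp
  have e2T: "e \<le> 2 * T" using dist_triangle[of z w y] dz dw unfolding e_def by (simp add: dist_commute)
  define xx where "xx = T - e^2 / (2 * T)"
  have xxle: "xx \<le> T" unfolding xx_def using T by simp
  have "e^2 \<le> (2*T)^2" using e0 e2T by (intro power_mono) auto
  then have "e^2 / (2*T) \<le> 2 * T" using T by (simp add: field_simps power2_eq_square)
  then have xxge: "- T \<le> xx" unfolding xx_def by simp
  have xxsq: "xx^2 \<le> T^2" using xxle xxge T by (metis abs_le_iff abs_of_pos minus_le_iff power2_le_iff_abs_le order_less_imp_le)
  define yy where "yy = sqrt (T^2 - xx^2)"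
  have yy2: "yy^2 = T^2 - xx^2" unfolding yy_def using xxsq by simp
  define c' where "c' = Complex xx yy"
  have d1: "dist (0::complex) (of_real T) = dist y z" using dz T by (simp add: dist_norm)
  have d3: "dist c' 0 = dist w y"
  proof -
    have "dist c' 0 = sqrt (xx^2 + yy^2)" unfolding c'_def by (simp add: dist_norm cmod_def)
    also have "\<dots> = sqrt (T^2)" using yy2 by simp
    also have "\<dots> = T" using T by simp
    finally show ?thesis using dw by (simp add: dist_commute)
  qed
  have cT: "cmod (of_real T - c') = e"
  proof -
    have "cmod (of_real T - c') = sqrt ((T - xx)^2 + yy^2)" unfolding c'_def by (simp add: cmod_def)
    also have "(T - xx)^2 + yy^2 = e^2" using yy2 T unfolding xx_def by (simp add: field_simps power2_eq_square)
    finally show ?thesis using e0 by simp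
  qed
  have d2: "dist (of_real T) c' = dist z w" using cT unfolding e_def by (simp add: dist_norm)
  have main: "\<forall>p p' q q'. tri_cmp y z w g g2 g3 0 (of_real T) c' p p' \<and> tri_cmp y z w g g2 g3 0 (of_real T) c' q q'
            \<longrightarrow> dist p q \<le> dist p' q'"
    using cmp g g2 g3 d1 d2 d3 by blast
  define s where "s = K / T"
  have s01: "0 \<le> s" "s \<le> 1" unfolding s_def using K0 KT T by auto
  have tp: "tri_cmp y z w g g2 g3 0 (of_real T) c' (g K) (0 + of_real s * (of_real T - 0))"
    unfolding tri_cmp_def using s01 T dz by (intro exI[of _ s]) (simp add: s_def)
  have "(1 - s) * dist w y = T - K" unfolding s_def using T dw by (simp add: dist_commute field_simps)
  then have "g3 ((1 - s) * dist w y) = h K" unfolding g3_def by simp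
  then have tq: "tri_cmp y z w g g2 g3 0 (of_real T) c' (h K) (c' + of_real (1 - s) * (0 - c'))"
    unfolding tri_cmp_def using s01 by (intro exI[of _ "1 - s"]) auto
  have "dist (g K) (h K) \<le> dist (0 + of_real s * (of_real T - 0)) (c' + of_real (1 - s) * (0 - c'))"
    using main tp tq by blast
  also have "(0 + of_real s * (of_real T - 0)) - (c' + of_real (1 - s) * (0 - c')) = of_real s * (of_real T - c')"
    by (simp add: algebra_simps)
  then have "dist (0 + of_real s * (of_real T - 0)) (c' + of_real (1 - s) * (0 - c')) = s * e"
    using cT s01 by (simp add: dist_norm norm_mult)
  also have "s * e \<le> e" using s01 e0 by (simp add: mult_left_le_one_le)
  finally show ?thesis unfolding e_def .
qed



lemma concat_mixed:
  fixes a b c :: "'a::metric_space"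
  assumes g1: "geodesic_segment g1 a b" and g2: "geodesic_segment g2 b c"
    and d: "dist a c = dist a b + dist b c"
    and s: "0 \<le> s" "s \<le> dist a b" and t: "dist a b < t" "t \<le> dist a b + dist b c"
  shows "dist (g1 s) (g2 (t - dist a b)) = t - s"
proof -
  define D1 where "D1 = dist a b"
  define D2 where "D2 = dist b c"
  have e1: "g1 0 = a" "g1 D1 = b" and i1: "\<And>s t. 0 \<le> s \<Longrightarrow> s \<le> D1 \<Longrightarrow> 0 \<le> t \<Longrightarrow> t \<le> D1 \<Longrightarrow> dist (g1 s) (g1 t) = \<bar>s - t\<bar>"
    using g1 unfolding geodesic_segment_def D1_def by auto
  have e2: "g2 0 = b" "g2 D2 = c" and i2: "\<And>s t. 0 \<le> s \<Longrightarrow> s \<le> D2 \<Longrightarrow> 0 \<le> t \<Longrightarrow> t \<le> D2 \<Longrightarrow> dist (g2 s) (g2 t) = \<bar>s - t\<bar>"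
    using g2 unfolding geodesic_segment_def D2_def by auto
  have a1: "dist (g1 s) b = D1 - s" using i1[of s D1] s e1 unfolding D1_def by simp
  have a2: "dist b (g2 (t - D1)) = t - D1" using i2[of 0 "t - D1"] t e2 unfolding D1_def D2_def by simp
  have a3: "dist a (g1 s) = s" using i1[of 0 s] s e1 unfolding D1_def by simp
  have a4: "dist (g2 (t - D1)) c = D2 - (t - D1)" using i2[of "t - D1" D2] t e2 unfolding D1_def D2_def by simp
  have u: "dist (g1 s) (g2 (t - D1)) \<le> t - s" using dist_triangle[of "g1 s" "g2 (t - D1)" b] a1 a2 by simp
  have "dist a c \<le> dist a (g1 s) + dist (g1 s) (g2 (t - D1)) + dist (g2 (t - D1)) c"
    by (metis dist_triangle add_right_mono order_trans)
  then have "t - s \<le> dist (g1 s) (g2 (t - D1))" using a3 a4 d unfolding D1_def D2_def by simp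
  then show ?thesis using u unfolding D1_def by simp
qed

lemma concat_geodesic:
  fixes a b c :: "'a::metric_space"
  assumes g1: "geodesic_segment g1 a b" and g2: "geodesic_segment g2 b c"
    and d: "dist a c = dist a b + dist b c"
  shows "geodesic_segment (\<lambda>t. if t \<le> dist a b then g1 t else g2 (t - dist a b)) a c"
proof -
  define D1 where "D1 = dist a b"
  define D2 where "D2 = dist b c"
  have e1: "g1 0 = a" "g1 D1 = b" and i1: "\<And>s t. 0 \<le> s \<Longrightarrow> s \<le> D1 \<Longrightarrow> 0 \<le> t \<Longrightarrow> t \<le> D1 \<Longrightarrow> dist (g1 s) (g1 t) = \<bar>s - t\<bar>"
    using g1 unfolding geodesic_segment_def D1_def by auto
  have e2: "g2 0 = b" "g2 D2 = c" and i2: "\<And>s t. 0 \<le> s \<Longrightarrow> s \<le> D2 \<Longrightarrow> 0 \<le> t \<Longrightarrow> t \<le> D2 \<Longrightarrow> dist (g2 s) (g2 t) = \<bar>s - t\<bar>"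
    using g2 unfolding geodesic_segment_def D2_def by auto
  have D10: "0 \<le> D1" "0 \<le> D2" unfolding D1_def D2_def by auto
  show ?thesis unfolding geodesic_segment_def D1_def[symmetric]
  proof (intro conjI allI impI)
    show "(if 0 \<le> D1 then g1 0 else g2 (0 - D1)) = a" using e1 D10 by simp
    show "(if dist a c \<le> D1 then g1 (dist a c) else g2 (dist a c - D1)) = c"
    proof (cases "D2 = 0")
      case True
      then have "c = b" unfolding D2_def by simp
      then show ?thesis using e1 d True unfolding D1_def D2_def by simp
    next
      case False
      then show ?thesis using e2 d D10 unfolding D1_def D2_def by simp
    qed
    fix s t assume st: "0 \<le> s \<and> s \<le> dist a c \<and> 0 \<le> t \<and> t \<le> dist a c"
    show "dist (if s \<le> D1 then g1 s else g2 (s - D1)) (if t \<le> D1 then g1 t else g2 (t - D1)) = \<bar>s - t\<bar>"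
    proof (cases "s \<le> D1"; cases "t \<le> D1")
      assume "s \<le> D1" "t \<le> D1" then show ?thesis using i1 st by simp
    next
      assume "\<not> s \<le> D1" "\<not> t \<le> D1" then show ?thesis using i2[of "s - D1" "t - D1"] st d unfolding D1_def D2_def by simp
    next
      assume 1: "s \<le> D1" "\<not> t \<le> D1"
      then show ?thesis using concat_mixed[OF g1 g2 d, of s t] st d unfolding D1_def by simp
    next
      assume 1: "\<not> s \<le> D1" "t \<le> D1"
      then show ?thesis using concat_mixed[OF g1 g2 d, of t s] st d unfolding D1_def by (simp add: dist_commute)
    qed
  qed
qed


theorem corollary4:
  fixes x0 y :: "'a::metric_space"
  assumes "CAT0_space TYPE('a)"
    and "locally_compact_metric TYPE('a)"
    and "geodesically_complete TYPE('a)"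
    and "connected_at_infinity TYPE('a)"
    and "y \<noteq> x0"
  shows "\<forall>K>0. \<forall>\<epsilon>>0. \<exists>\<delta>>0. \<forall>x1. dist x0 x1 < \<delta> \<and> dist y x1 = dist y x0 \<longrightarrow>
           boundary_shadow y x1 \<subseteq> ray_nbhd y K \<epsilon> (boundary_shadow y x0)"
proof (intro allI impI)
  fix K \<epsilon> :: real assume K: "K > 0" and eps: "\<epsilon> > 0"
  have cp: "complete (UNIV::'a set)" and gs: "geodesic_space TYPE('a)"
    using assms(1) unfolding CAT0_space_def by blast+
  define d0 where "d0 = dist y x0"
  have d0: "d0 > 0" using assms(5) unfolding d0_def by simp
  define T where "T = K + d0"
  have T: "T > 0" "K \<le> T" "d0 < T" using K d0 unfolding T_def by auto
  let ?N = "ray_nbhd y K \<epsilon> (boundary_shadow y x0)"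
  show "\<exists>\<delta>>0. \<forall>x1. dist x0 x1 < \<delta> \<and> dist y x1 = dist y x0 \<longrightarrow> boundary_shadow y x1 \<subseteq> ?N"
  proof (rule ccontr)
    assume H: "\<not> (\<exists>\<delta>>0. \<forall>x1. dist x0 x1 < \<delta> \<and> dist y x1 = dist y x0 \<longrightarrow> boundary_shadow y x1 \<subseteq> ?N)"
    have ex: "\<exists>x1 \<zeta> c. dist x0 x1 < 1 / (real n + 1) \<and> \<zeta> \<in> boundary_shadow y x1 \<and> \<zeta> \<notin> ?N
        \<and> ray_from_to y \<zeta> c \<and> c d0 = x1" for n :: nat
    proof -
      have "1 / (real n + 1) > 0" by simp
      then obtain x1 where x1: "dist x0 x1 < 1 / (real n + 1)" "dist y x1 = dist y x0"
          "\<not> boundary_shadow y x1 \<subseteq> ?N" using H by blast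
      then obtain \<zeta> where z: "\<zeta> \<in> boundary_shadow y x1" "\<zeta> \<notin> ?N" by blast
      then obtain c t where c: "ray_from_to y \<zeta> c" "t \<ge> 0" "c t = x1"
        unfolding boundary_shadow_def by blast
      have "dist (c 0) (c t) = \<bar>0 - t\<bar>" using c unfolding ray_from_to_def geodesic_ray_def by auto
      then have "t = d0" using c x1(2) unfolding ray_from_to_def d0_def by simp
      then show ?thesis using x1 z c by blast
    qed
    obtain X Z C where P: "\<And>n. dist x0 (X n) < 1 / (real n + 1) \<and> Z n \<in> boundary_shadow y (X n) \<and> Z n \<notin> ?N
        \<and> ray_from_to y (Z n) (C n) \<and> C n d0 = X n"
      using ex by metis
    have Cray: "geodesic_ray (C n)" "C n 0 = y" for n using P[of n] unfolding ray_from_to_def by auto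
    have Cd: "dist (C n s) (C n t) = \<bar>s - t\<bar>" if "0 \<le> s" "0 \<le> t" for n s t
      using Cray(1)[of n] that unfolding geodesic_ray_def by blast
    define W where "W n = C n T" for n
    have dW: "dist y (W n) = T" for n using Cd[of 0 T n] Cray(2)[of n] T unfolding W_def by simp
    have dXW: "dist (X n) (W n) = T - d0" for n
      using Cd[of d0 T n] P[of n] T d0 unfolding W_def by simp
    have "compact (cball y T)" by (rule proper[OF cp gs assms(2)])
    then have "seq_compact (cball y T)" by (rule compact_imp_seq_compact)
    moreover have "\<forall>n. W n \<in> cball y T" using dW by simp
    ultimately obtain z r where zr: "z \<in> cball y T" "strict_mono r" "(W \<circ> r) \<longlonglongrightarrow> z"
      by (rule seq_compactE)
    have "X \<longlonglongrightarrow> x0"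
    proof (rule metric_LIMSEQ_I)
      fix e :: real assume e: "e > 0"
      obtain N :: nat where N: "N > 0" "inverse (real N) < e" using ex_inverse_of_nat_less[OF e] by blast
      have "dist (X n) x0 < e" if "n \<ge> N" for n
      proof -
        have "1 / (real n + 1) \<le> inverse (real N)" using that N by (simp add: field_simps)
        then show ?thesis using P[of n] N by (simp add: dist_commute)
      qed
      then show "\<exists>no. \<forall>n\<ge>no. dist (X n) x0 < e" by blast
    qed
    then have Xr: "(X \<circ> r) \<longlonglongrightarrow> x0" using zr(2) by (rule LIMSEQ_subseq_LIMSEQ)
    have "(\<lambda>n. dist y ((W \<circ> r) n)) \<longlonglongrightarrow> dist y z" using zr(3) by (intro tendsto_intros)
    moreover have "(\<lambda>n. dist y ((W \<circ> r) n)) = (\<lambda>n. T)" using dW by simp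
    ultimately have dyz: "dist y z = T" using LIMSEQ_unique tendsto_const by metis
    have "(\<lambda>n. dist ((X \<circ> r) n) ((W \<circ> r) n)) \<longlonglongrightarrow> dist x0 z" using zr(3) Xr by (intro tendsto_intros)
    moreover have "(\<lambda>n. dist ((X \<circ> r) n) ((W \<circ> r) n)) = (\<lambda>n. T - d0)" using dXW by simp
    ultimately have dxz: "dist x0 z = T - d0" using LIMSEQ_unique tendsto_const by metis
    obtain g1 where g1: "geodesic_segment g1 y x0" using gs unfolding geodesic_space_def by blast
    obtain g2 where g2: "geodesic_segment g2 x0 z" using gs unfolding geodesic_space_def by blast
    define G where "G = (\<lambda>t. if t \<le> dist y x0 then g1 t else g2 (t - dist y x0))"
    have G: "geodesic_segment G y z" unfolding G_def
      by (rule concat_geodesic[OF g1 g2]) (use dyz dxz T in \<open>simp add: d0_def\<close>)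
    have Gd0: "G d0 = x0" using g1 unfolding G_def d0_def geodesic_segment_def by simp
    have "y \<noteq> z" using dyz T by auto
    then obtain L where L: "geodesic_line L" "\<And>t. 0 \<le> t \<and> t \<le> dist y z \<Longrightarrow> L t = G t"
      using assms(3) G unfolding geodesically_complete_def by blast
    define \<xi> where "\<xi> = ray_class L"
    have Lray: "geodesic_ray L" using L(1) unfolding geodesic_line_def geodesic_ray_def by blast
    have L0: "L 0 = y" using L(2)[of 0] G unfolding geodesic_segment_def by simp
    have "asymptotic L L" unfolding asymptotic_def by (intro exI[of _ 0]) simp
    then have rL: "ray_from_to y \<xi> L" unfolding ray_from_to_def \<xi>_def ray_class_def using Lray L0 by simp
    have xib: "\<xi> \<in> boundary_at_infinity" unfolding boundary_at_infinity_def \<xi>_def using Lray by blast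
    have "L d0 = x0" using L(2)[of d0] Gd0 d0 T dyz by simp
    then have xis: "\<xi> \<in> boundary_shadow y x0" unfolding boundary_shadow_def using xib rL d0
      by (intro CollectI conjI exI[of _ L]) (auto intro!: exI[of _ d0])
    obtain n where n: "dist ((W \<circ> r) n) z < \<epsilon>" using metric_LIMSEQ_D[OF zr(3) eps] by blast
    define m where "m = r n"
    have hseg: "geodesic_segment (C m) y (W m)"
      unfolding geodesic_segment_def using Cd[of _ _ m] Cray(2)[of m] dW[of m] W_def by auto
    have "dist (G K) (C m K) \<le> dist z (W m)"
      by (rule cat0_isoceles[OF assms(1) G hseg dyz dW]) (use K T in auto)
    moreover have "G K = L K" using L(2)[of K] K T dyz by simp
    ultimately have "dist (L K) (C m K) < \<epsilon>" using n unfolding m_def by (simp add: dist_commute)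
    moreover have "Z m \<in> boundary_at_infinity" using P[of m] unfolding boundary_shadow_def by blast
    ultimately have "Z m \<in> ?N" unfolding ray_nbhd_def using xis rL P[of m] by blast
    then show False using P[of m] by blast
  qed
qed

end
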